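(* Let $\omega=e^{i\theta}$ with $-\pi<\theta\le\pi$. (a) Put $\omega^{1/4}=e^{i\theta/4}$. If $0<|\omega^{1/4}-z|<c_1$ for some $z\in\mathbb{C}$ with $|z|=1$ and some $0<c_1<\sqrt2$, then $|\omega-z^4|>c_2|\omega^{1/4}-z|$, where $c_2=(2-c_1^2)\sqrt{4-c_1^2}$. (b) If $0<|\omega-z^4|<c_0$ for some $z\in\mathbb{C}$ with $|z|=1$ and some $0<c_0\le2$, then $0<|\omega^{1/4}-z|<c_3$ for some fourth root $\omega^{1/4}$ of $\omega$, where $c_3$ is the smallest positive real root of $x^8-8x^6+20x^4-16x^2+c_0^2$. *)

theory Defs
  imports Complex_Main
begin

end

theory Submission
  imports Defs
begin

lemma L:
  fixes w z :: complex
  assumes w: "cmod w = 1" and z: "cmod z = 1"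
  shows "cmod (w - z)^2 = 2 - 2 * Re (w * cnj z)"
    and "cmod (w + z)^2 = 2 + 2 * Re (w * cnj z)"
    and "cmod (w^2 + z^2) = 2 * \<bar>Re (w * cnj z)\<bar>"
    and "cmod (w^4 - z^4) = cmod (w - z) * cmod (w + z) * cmod (w^2 + z^2)"
proof -
  obtain p q where wpq: "w = Complex p q" by (cases w)
  obtain r s where zrs: "z = Complex r s" by (cases z)
  have 1: "p^2 + q^2 = 1" using w unfolding wpq using cmod_power2[of "Complex p q"] by simp
  have 2: "r^2 + s^2 = 1" using z unfolding zrs using cmod_power2[of "Complex r s"] by simp
  have x: "Re (w * cnj z) = p*r + q*s" by (simp add: wpq zrs)
  show "cmod (w - z)^2 = 2 - 2 * Re (w * cnj z)"
    unfolding x cmod_power2 using 1 2 by (simp add: wpq zrs power2_eq_square algebra_simps)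
  show "cmod (w + z)^2 = 2 + 2 * Re (w * cnj z)"
    unfolding x cmod_power2 using 1 2 by (simp add: wpq zrs power2_eq_square algebra_simps)
  have id: "(p^2-q^2+r^2-s^2)^2 + (2*p*q+2*r*s)^2 - 4*(p*r+q*s)^2 = (p^2+q^2-r^2-s^2)^2"
    by (simp add: power2_eq_square algebra_simps)
  have "cmod (w^2 + z^2)^2 = (p^2-q^2+r^2-s^2)^2 + (2*p*q+2*r*s)^2"
    unfolding cmod_power2 by (simp add: wpq zrs power2_eq_square algebra_simps)
  also have "\<dots> = (2 * \<bar>p*r+q*s\<bar>)^2"
  proof -
    have "p^2+q^2-r^2-s^2 = 0" using 1 2 by simp
    then have "(p^2-q^2+r^2-s^2)^2 + (2*p*q+2*r*s)^2 - 4*(p*r+q*s)^2 = 0" using id by simp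
    then show ?thesis by (simp add: power_mult_distrib)
  qed
  finally have "cmod (w^2 + z^2)^2 = (2 * \<bar>p*r+q*s\<bar>)^2" .
  then show "cmod (w^2 + z^2) = 2 * \<bar>Re (w * cnj z)\<bar>" unfolding x
    by (metis abs_ge_zero norm_ge_zero power2_eq_iff_nonneg mult_nonneg_nonneg zero_le_numeral)
  have "w^4 - z^4 = (w - z) * (w + z) * (w^2 + z^2)" by (simp add: algebra_simps power2_eq_square power4_eq_xxxx)
  then show "cmod (w^4 - z^4) = cmod (w - z) * cmod (w + z) * cmod (w^2 + z^2)" by (simp add: norm_mult)
qed
lemma w4: "exp (\<i> * of_real \<theta>) = exp (\<i> * of_real (\<theta> / 4)) ^ 4"
proof -
  have "exp (\<i> * of_real \<theta>) = exp (of_nat 4 * (\<i> * of_real (\<theta> / 4)))" by simp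
  then show ?thesis by (simp only: exp_of_nat_mult)
qed

lemma partA:
  fixes a z :: complex and c1 :: real
  assumes a: "cmod a = 1" and z: "cmod z = 1" and c1: "0 < c1" "c1 < sqrt 2"
    and d: "0 < cmod (a - z)" "cmod (a - z) < c1"
  shows "cmod (a^4 - z^4) > (2 - c1^2) * sqrt (4 - c1^2) * cmod (a - z)"
proof -
  define d where "d = cmod (a - z)"
  define x where "x = Re (a * cnj z)"
  note l = L[OF a z, folded x_def d_def]
  have c12: "c1^2 < 2" using power_strict_mono[of c1 "sqrt 2" 2] c1 by simp
  have dc: "d^2 < c1^2" using d unfolding d_def[symmetric] by (simp add: power_strict_mono)
  have e1: "cmod (a + z) = sqrt (4 - d^2)" 
  proof -
    have "cmod (a + z)^2 = 4 - d^2" using l(1,2) by simp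
    then show ?thesis by (metis norm_ge_zero real_sqrt_unique)
  qed
  have e2: "cmod (a^2 + z^2) = 2 - d^2" using l(1,3) dc c12 by auto
  have "cmod (a^4 - z^4) = d * (sqrt (4 - d^2) * (2 - d^2))" using l(4) e1 e2 by simp
  moreover have "(2 - c1^2) * sqrt (4 - c1^2) < sqrt (4 - d^2) * (2 - d^2)"
  proof -
    have "sqrt (4 - c1^2) < sqrt (4 - d^2)" using dc by simp
    moreover have "0 < 2 - c1^2" using c12 by simp
    moreover have "2 - c1^2 < 2 - d^2" using dc by simp
    moreover have "0 \<le> sqrt (4 - c1^2)" using c12 by simp
    ultimately show ?thesis
      using mult_strict_mono[of "2 - c1^2" "2 - d^2" "sqrt (4 - c1^2)" "sqrt (4 - d^2)"]
      by (simp add: mult.commute)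
  qed
  ultimately show ?thesis using d unfolding d_def[symmetric] by (simp add: mult.commute mult.left_commute)
qed
lemma choose_w:
  fixes a z :: complex
  assumes a: "cmod a = 1"
  shows "\<exists>w. w^4 = a^4 \<and> cmod w = 1 \<and> \<bar>Im (w * cnj z)\<bar> \<le> Re (w * cnj z)"
proof -
  define u where "u = a * cnj z"
  have i4: "\<i>^4 = (1::complex)" by (simp add: power4_eq_xxxx)
  have m4: "(-1)^4 = (1::complex)" by (simp add: power4_eq_xxxx)
  have mi4: "(-\<i>)^4 = (1::complex)" by (simp add: power4_eq_xxxx)
  consider "\<bar>Im u\<bar> \<le> Re u" | "\<bar>Im u\<bar> \<le> - Re u" | "\<bar>Re u\<bar> \<le> Im u" | "\<bar>Re u\<bar> \<le> - Im u" by linarith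
  then show ?thesis
  proof cases
    case 1
    then show ?thesis using a unfolding u_def by blast
  next
    case 2
    have "((-1) * a)^4 = a^4" by (simp only: power_mult_distrib m4) simp
    moreover have "cmod ((-1) * a) = 1" using a by simp
    moreover have "Re (((-1) * a) * cnj z) = - Re u" "Im (((-1) * a) * cnj z) = - Im u"
      by (simp_all add: u_def)
    ultimately show ?thesis using 2 by (intro exI[of _ "(-1) * a"]) simp
  next
    case 3
    have "((-\<i>) * a)^4 = a^4" by (simp only: power_mult_distrib mi4) simp
    moreover have "cmod ((-\<i>) * a) = 1" using a by (simp add: norm_mult)
    moreover have "Re (((-\<i>) * a) * cnj z) = Im u" "Im (((-\<i>) * a) * cnj z) = - Re u"
      by (simp_all add: u_def)
    ultimately show ?thesis using 3 by (intro exI[of _ "(-\<i>) * a"]) simp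
  next
    case 4
    have "(\<i> * a)^4 = a^4" by (simp only: power_mult_distrib i4) simp
    moreover have "cmod (\<i> * a) = 1" using a by (simp add: norm_mult)
    moreover have "Re ((\<i> * a) * cnj z) = - Im u" "Im ((\<i> * a) * cnj z) = Re u"
      by (simp_all add: u_def)
    ultimately show ?thesis using 4 by (intro exI[of _ "\<i> * a"]) simp
  qed
qed

lemma polyC: fixes c3 c0 :: real
  assumes c3: "c3 ^ 8 - 8 * c3 ^ 6 + 20 * c3 ^ 4 - 16 * c3 ^ 2 + c0 ^ 2 = 0"
  shows "c0^2 = 16 * (1 - c3^2/2)^2 * (1 - (1 - c3^2/2)^2)"
proof -
  define t where "t = c3^2"
  have "c3^8 = t^4" "c3^6 = t^3" "c3^4 = t^2" by (simp_all add: t_def flip: power_mult)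
  then have "c0^2 = 16*t - 20*t^2 + 8*t^3 - t^4" using c3 unfolding t_def[symmetric] by linarith
  also have "\<dots> = 16 * (1 - t/2)^2 * (1 - (1 - t/2)^2)"
    by (simp add: power2_eq_square power3_eq_cube power4_eq_xxxx field_simps)
  finally show ?thesis unfolding t_def .
qed

lemma partB:
  fixes a z :: complex and c0 c3 :: real
  assumes a: "cmod a = 1" and z: "cmod z = 1" and c0: "0 < c0" "c0 \<le> 2"
    and e: "0 < cmod (a^4 - z^4)" "cmod (a^4 - z^4) < c0"
    and c3: "0 < c3" "c3 ^ 8 - 8 * c3 ^ 6 + 20 * c3 ^ 4 - 16 * c3 ^ 2 + c0 ^ 2 = 0"
  shows "\<exists>w::complex. w ^ 4 = a^4 \<and> 0 < cmod (w - z) \<and> cmod (w - z) < c3"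
proof -
  obtain w where w4: "w^4 = a^4" and w: "cmod w = 1" and wr: "\<bar>Im (w * cnj z)\<bar> \<le> Re (w * cnj z)"
    using choose_w[OF a] by blast
  define d where "d = cmod (w - z)"
  define x where "x = Re (w * cnj z)"
  note l = L[OF w z, folded x_def d_def]
  have um: "cmod (w * cnj z) = 1" using w z by (simp add: norm_mult)
  have "x^2 + Im (w * cnj z)^2 = 1" using um cmod_power2[of "w * cnj z"] x_def by simp
  moreover have "Im (w * cnj z)^2 \<le> x^2" using wr x_def
    by (metis abs_le_square_iff abs_of_nonneg abs_ge_zero order_trans)
  ultimately have X: "1/2 \<le> x^2" by simp
  have x0: "0 \<le> x" using wr x_def by linarith
  define e where "e = cmod (a^4 - z^4)"
  have "e^2 = d^2 * cmod (w + z)^2 * cmod (w^2 + z^2)^2" using l(4) w4 unfolding e_def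
    by (simp add: power_mult_distrib)
  also have "\<dots> = (2 - 2*x) * (2 + 2*x) * (2 * \<bar>x\<bar>)^2" by (simp only: l(1) l(2) l(3))
  also have "\<dots> = 16 * x^2 * (1 - x^2)"
    by (simp only: power_mult_distrib power2_abs) (simp add: power2_eq_square algebra_simps)
  finally have E: "e^2 = 16 * x^2 * (1 - x^2)" .
  have dpos: "0 < d"
  proof (rule ccontr)
    assume "\<not> 0 < d"
    then have "w = z" unfolding d_def by simp
    then show False using e w4 by simp
  qed
  have "d < c3"
  proof (rule ccontr)
    assume "\<not> d < c3"
    then have "c3^2 \<le> d^2" using c3 by (simp add: power_mono)
    define y where "y = 1 - c3^2/2"
    have yx: "x \<le> y" using \<open>c3^2 \<le> d^2\<close> l(1) unfolding y_def by simp
    have "x^2 \<le> y^2" using yx x0 by (simp add: power_mono)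
    have C: "c0^2 = 16 * y^2 * (1 - y^2)" unfolding y_def by (rule polyC[OF c3(2)])
    have "e^2 < c0^2" using e unfolding e_def[symmetric] by (simp add: power_strict_mono)
    then have "x^2 * (1 - x^2) < y^2 * (1 - y^2)" using E C by simp
    moreover have "y^2 * (1 - y^2) - x^2 * (1 - x^2) = (y^2 - x^2) * (1 - x^2 - y^2)" by (simp add: algebra_simps)
    moreover have "(y^2 - x^2) * (1 - x^2 - y^2) \<le> 0"
      using \<open>x^2 \<le> y^2\<close> X by (intro mult_nonneg_nonpos) auto
    ultimately show False by linarith
  qed
  then show ?thesis using w4 dpos d_def by blast
qed

theorem lemma3p7:
  fixes \<theta> :: real
  assumes "- pi < \<theta>" and "\<theta> \<le> pi"
  shows "(\<forall>(z::complex) (c1::real).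
            cmod z = 1 \<and> 0 < c1 \<and> c1 < sqrt 2 \<and>
            0 < cmod (exp (\<i> * of_real (\<theta> / 4)) - z) \<and>
            cmod (exp (\<i> * of_real (\<theta> / 4)) - z) < c1 \<longrightarrow>
            cmod (exp (\<i> * of_real \<theta>) - z ^ 4)
              > (2 - c1\<^sup>2) * sqrt (4 - c1\<^sup>2) * cmod (exp (\<i> * of_real (\<theta> / 4)) - z))
       \<and> (\<forall>(z::complex) (c0::real) (c3::real).
            cmod z = 1 \<and> 0 < c0 \<and> c0 \<le> 2 \<and>
            0 < cmod (exp (\<i> * of_real \<theta>) - z ^ 4) \<and>
            cmod (exp (\<i> * of_real \<theta>) - z ^ 4) < c0 \<and>
            0 < c3 \<and> c3 ^ 8 - 8 * c3 ^ 6 + 20 * c3 ^ 4 - 16 * c3 ^ 2 + c0 ^ 2 = 0 \<and>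
            (\<forall>x::real. 0 < x \<and> x ^ 8 - 8 * x ^ 6 + 20 * x ^ 4 - 16 * x ^ 2 + c0 ^ 2 = 0
                 \<longrightarrow> c3 \<le> x) \<longrightarrow>
            (\<exists>w::complex. w ^ 4 = exp (\<i> * of_real \<theta>) \<and>
                 0 < cmod (w - z) \<and> cmod (w - z) < c3))"
proof -
  define a where "a = exp (\<i> * of_real (\<theta> / 4))"
  have a1: "cmod a = 1" unfolding a_def by simp
  have aw: "exp (\<i> * of_real \<theta>) = a^4" unfolding a_def by (rule w4)
  show ?thesis unfolding aw a_def[symmetric]
  proof (intro conjI allI impI)
    fix z :: complex and c1 :: real
    assume h: "cmod z = 1 \<and> 0 < c1 \<and> c1 < sqrt 2 \<and> 0 < cmod (a - z) \<and> cmod (a - z) < c1"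
    have h1: "cmod z = 1" and h2: "0 < c1" and h3: "c1 < sqrt 2" and h4: "0 < cmod (a - z)"
      and h5: "cmod (a - z) < c1" using h by auto
    show "cmod (a^4 - z^4) > (2 - c1\<^sup>2) * sqrt (4 - c1\<^sup>2) * cmod (a - z)"
      by (rule partA[OF a1 h1 h2 h3 h4 h5])
  next
    fix z :: complex and c0 c3 :: real
    assume h: "cmod z = 1 \<and> 0 < c0 \<and> c0 \<le> 2 \<and> 0 < cmod (a^4 - z ^ 4) \<and>
            cmod (a^4 - z ^ 4) < c0 \<and>
            0 < c3 \<and> c3 ^ 8 - 8 * c3 ^ 6 + 20 * c3 ^ 4 - 16 * c3 ^ 2 + c0 ^ 2 = 0 \<and>
            (\<forall>x::real. 0 < x \<and> x ^ 8 - 8 * x ^ 6 + 20 * x ^ 4 - 16 * x ^ 2 + c0 ^ 2 = 0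
                 \<longrightarrow> c3 \<le> x)"
    have h1: "cmod z = 1" and h2: "0 < c0" and h3: "c0 \<le> 2" and h4: "0 < cmod (a^4 - z ^ 4)"
      and h5: "cmod (a^4 - z ^ 4) < c0" and h6: "0 < c3"
      and h7: "c3 ^ 8 - 8 * c3 ^ 6 + 20 * c3 ^ 4 - 16 * c3 ^ 2 + c0 ^ 2 = 0"
      using h by auto
    show "\<exists>w::complex. w ^ 4 = a^4 \<and> 0 < cmod (w - z) \<and> cmod (w - z) < c3"
      by (rule partB[OF a1 h1 h2 h3 h4 h5 h6 h7])
  qed
qed

end
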